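(* Let $r>\frac{2}{3}$, $D>0$, $\mu\in\mathbb{R}$ and $c<u_b(r)$ be fixed, where $u_b(r)$ is defined in the context. Consider the system $$\dot q=s,\qquad \dot s=\frac{1}{D}\big((u+\mu)s-f(q,u;r)\big),\qquad \dot u=\frac{\epsilon}{u-c}\,g(q,u)$$ with $f(q,u;r)=q\big(r+u-2-(r+0.1)(q-1)^2\big)$ and $g(q,u)=2-u+2q(1-u)$. Then the equilibria $X_1=(0,0,2)$ and $X_2=(q_{b,+}(r),0,u_b(r))$ of this system are hyperbolic for all $\epsilon>0$ sufficiently small.
   Context: This is the traveling-wave ODE (with $\dot{}=d/d\xi$, $\xi=x-ct$) of the Barkley pipe-flow model $q_t=Dq_{xx}+(\zeta-u)q_x+f(q,u;r)$, $u_t=-uu_x+\epsilon g(q,u)$, with $\mu=-(\zeta+c)$. For $r>\frac23$, $u_b(r)\in(\frac65,\frac43)$ denotes the unique value of $u$ in $(\frac65,\frac43)$ such that, with $q_{b,+}(r)=1+\sqrt{\frac{r+u_b(r)-2}{r+0.1}}>1$, one has $g(q_{b,+}(r),u_b(r))=0$; then $X_2=(q_{b,+}(r),0,u_b(r))$ is an equilibrium (the "turbulent" state) and $X_1=(0,0,2)$ is the "laminar" equilibrium. *)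

theory Defs
  imports "HOL-Analysis.Analysis"
begin

definition fB :: "real \<Rightarrow> real \<Rightarrow> real \<Rightarrow> real" where
  "fB q u r = q * (r + u - 2 - (r + 1/10) * (q - 1)^2)"

definition gB :: "real \<Rightarrow> real \<Rightarrow> real" where
  "gB q u = 2 - u + 2 * q * (1 - u)"

definition qbp_of :: "real \<Rightarrow> real \<Rightarrow> real" where
  "qbp_of r u = 1 + sqrt ((r + u - 2) / (r + 1/10))"

definition u_b :: "real \<Rightarrow> real" where
  "u_b r = (THE u. 6/5 < u \<and> u < 4/3 \<and> gB (qbp_of r u) u = 0)"

definition q_bp :: "real \<Rightarrow> real" where
  "q_bp r = qbp_of r (u_b r)"

definition tw_field :: "real \<Rightarrow> real \<Rightarrow> real \<Rightarrow> real \<Rightarrow> real \<Rightarrow> real^3 \<Rightarrow> real^3" where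
  "tw_field r D \<mu> c \<epsilon> X =
     vector [X$2,
             ((X$3 + \<mu>) * X$2 - fB (X$1) (X$3) r) / D,
             \<epsilon> / (X$3 - c) * gB (X$1) (X$3)]"

definition is_complex_eigenvalue :: "real^'n^'n \<Rightarrow> complex \<Rightarrow> bool" where
  "is_complex_eigenvalue A z \<longleftrightarrow>
     (\<exists>v :: complex^'n. v \<noteq> 0 \<and>
        (\<chi> i. \<Sum>j\<in>UNIV. complex_of_real (A $ i $ j) * v $ j) = z *s v)"

definition hyperbolic_equilibrium :: "(real^'n \<Rightarrow> real^'n) \<Rightarrow> real^'n \<Rightarrow> bool" where
  "hyperbolic_equilibrium F x \<longleftrightarrow>
     F x = 0 \<and>
     (\<exists>L. (F has_derivative L) (at x) \<and>
          (\<forall>z. Re z = 0 \<longrightarrow> \<not> is_complex_eigenvalue (matrix L) z))"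

end

theory Submission
  imports Defs
begin

lemma vec3_nth_cases: "(P (1::3) \<and> P 2 \<and> P 3) \<Longrightarrow> P i"
  by (metis exhaust_3)

lemma eig3:
  fixes a b c d e :: real and z :: complex
  assumes "is_complex_eigenvalue (vector[vector[0,1,0], vector[a,b,c], vector[d,0,e]] :: real^3^3) z"
    and "z \<noteq> e"
  shows "(z^2 - b*z - a)*(z - e) - c*d = 0"
proof -
  obtain v :: "complex^3" where v0: "v \<noteq> 0" and ev:
    "(\<chi> i. \<Sum>j\<in>UNIV. complex_of_real ((vector[vector[0,1,0], vector[a,b,c], vector[d,0,e]] :: real^3^3) $ i $ j) * v $ j) = z *s v"
    using assms(1) unfolding is_complex_eigenvalue_def by blast
  have e1: "v$2 = z * v$1" using arg_cong[OF ev, of "\<lambda>w. w$1"] by (simp add: sum_3)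
  have e2: "a * v$1 + b * v$2 + c * v$3 = z * v$2" using arg_cong[OF ev, of "\<lambda>w. w$2"] by (simp add: sum_3)
  have e3: "d * v$1 + e * v$3 = z * v$3" using arg_cong[OF ev, of "\<lambda>w. w$3"] by (simp add: sum_3)
  have ze: "z - e \<noteq> 0" using assms(2) by simp
  have v1: "v$1 \<noteq> 0"
  proof
    assume h: "v$1 = 0"
    then have "v$2 = 0" using e1 by simp
    moreover have "e * v$3 = z * v$3" using e3 h by simp
    then have "(z - e) * v$3 = 0" by (auto simp: left_diff_distrib)
    then have "v$3 = 0" using ze by simp
    ultimately have "v = 0" using h by (simp add: vec_eq_iff) (metis exhaust_3)
    with v0 show False by simp
  qed
  have "(z - e) * v$3 = d * v$1" using e3 by (simp add: algebra_simps)
  have "((z^2 - b*z - a)*(z - e) - c*d) * v$1 = 0"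
  proof -
    have h0: "(z - e) * (a * v$1 + b * (z * v$1) + c * v$3 - z * (z * v$1)) = 0" using e2 e1 by simp
    have h1: "(z - e) * (a * v$1 + b * (z * v$1) + c * v$3 - z * (z * v$1))
       = - (((z^2 - b*z - a)*(z - e)) * v$1) + c * ((z - e) * v$3)"
      by (simp add: algebra_simps power2_eq_square)
    have "- (((z^2 - b*z - a)*(z - e)) * v$1) + c * (d * v$1) = 0"
      using h0 h1 \<open>(z - e) * v$3 = d * v$1\<close> by simp
    then show ?thesis by (simp add: algebra_simps)
  qed
  then show ?thesis using v1 by simp
qed

lemma eig3_imag:
  fixes a b c d e :: real and z :: complex
  assumes "is_complex_eigenvalue (vector[vector[0,1,0], vector[a,b,c], vector[d,0,e]] :: real^3^3) z"
    and "Re z = 0" and "e \<noteq> 0"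
  shows "e*((Im z)^2 + a) + b*(Im z)^2 - c*d = 0 \<and> Im z * (b*e - (Im z)^2 - a) = 0"
proof -
  define y where "y = Im z"
  have zy: "z = \<i> * of_real y" using assms(2) unfolding y_def by (simp add: complex_eq_iff)
  have "z \<noteq> e" using assms(2,3) by (auto simp: complex_eq_iff)
  from eig3[OF assms(1) this] have P: "(z^2 - b*z - a)*(z - e) - c*d = 0" .
  have "(z^2 - b*z - a)*(z - e) - c*d
     = of_real (e*(y^2 + a) + b*y^2 - c*d) + \<i> * of_real (y * (b*e - y^2 - a))"
    unfolding zy by (simp add: algebra_simps power2_eq_square)
  with P have "of_real (e*(y^2 + a) + b*y^2 - c*d) + \<i> * of_real (y * (b*e - y^2 - a)) = 0" by simp
  then show ?thesis unfolding y_def[symmetric] by (simp add: complex_eq_iff)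
qed

lemma vec3_decomp: "(vector [x,y,z] :: real^3) = x *\<^sub>R axis 1 1 + y *\<^sub>R axis 2 1 + z *\<^sub>R axis 3 1"
  by (simp add: vec_eq_iff axis_def) (metis exhaust_3 vector_3 num1_eq_iff)

lemma deriv3:
  fixes f1 f2 f3 :: "real^3 \<Rightarrow> real"
  assumes "(f1 has_derivative (\<lambda>h. a11*h$1 + a12*h$2 + a13*h$3)) (at x)"
    and "(f2 has_derivative (\<lambda>h. a21*h$1 + a22*h$2 + a23*h$3)) (at x)"
    and "(f3 has_derivative (\<lambda>h. a31*h$1 + a32*h$2 + a33*h$3)) (at x)"
  shows "((\<lambda>X. vector [f1 X, f2 X, f3 X] :: real^3) has_derivative
     (\<lambda>h. (vector[vector[a11,a12,a13],vector[a21,a22,a23],vector[a31,a32,a33]] :: real^3^3) *v h)) (at x)"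
proof -
  have "((\<lambda>X. f1 X *\<^sub>R axis 1 1 + f2 X *\<^sub>R axis 2 1 + f3 X *\<^sub>R axis 3 1) has_derivative
     (\<lambda>h. (a11*h$1 + a12*h$2 + a13*h$3) *\<^sub>R (axis 1 1 :: real^3) + (a21*h$1 + a22*h$2 + a23*h$3) *\<^sub>R axis 2 1
        + (a31*h$1 + a32*h$2 + a33*h$3) *\<^sub>R axis 3 1)) (at x)"
    by (intro has_derivative_add has_derivative_scaleR_left assms)
  moreover have "(\<lambda>h. (a11*h$1 + a12*h$2 + a13*h$3) *\<^sub>R (axis 1 1 :: real^3) + (a21*h$1 + a22*h$2 + a23*h$3) *\<^sub>R axis 2 1
        + (a31*h$1 + a32*h$2 + a33*h$3) *\<^sub>R axis 3 1) =
     (\<lambda>h. (vector[vector[a11,a12,a13],vector[a21,a22,a23],vector[a31,a32,a33]] :: real^3^3) *v h)"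
    by (rule ext) (simp add: vec3_decomp[symmetric] vec_eq_iff matrix_vector_mult_def sum_3 forall_3)
  ultimately show ?thesis by (simp add: vec3_decomp[symmetric])
qed

lemma root_q:
  assumes "gB (qbp_of r u) u = 0" "6/5 < u"
  shows "qbp_of r u * (2*(u - 1)) = 2 - u"
  using assms unfolding gB_def by (simp add: algebra_simps)

lemma qbp_mono:
  assumes "r > 2/3" "u1 < u2"
  shows "qbp_of r u1 < qbp_of r u2"
proof -
  have "(r + u1 - 2) / (r + 1/10) < (r + u2 - 2) / (r + 1/10)"
    using assms by (intro divide_strict_right_mono) auto
  then show ?thesis unfolding qbp_of_def by simp
qed

lemma u_b_props:
  assumes r: "r > 2/3"
  shows "6/5 < u_b r \<and> u_b r < 4/3 \<and> gB (qbp_of r (u_b r)) (u_b r) = 0"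
proof -
  let ?P = "\<lambda>u. 6/5 < u \<and> u < 4/3 \<and> gB (qbp_of r u) u = 0"
  define h where "h u = gB (qbp_of r u) u" for u
  have cont: "continuous_on {6/5..4/3} h"
    unfolding h_def gB_def qbp_of_def by (intro continuous_intros) (use r in auto)
  have s1: "sqrt ((r + 6/5 - 2) / (r + 1/10)) < 1"
  proof -
    have "(r + 6/5 - 2) / (r + 1/10) < 1" using r by (simp add: divide_less_eq)
    then show ?thesis by (simp add: real_sqrt_less_iff[where y = 1, simplified])
  qed
  have h1: "h (6/5) > 0" unfolding h_def gB_def qbp_of_def using s1 by simp
  have s2: "sqrt ((r + 4/3 - 2) / (r + 1/10)) > 0" using r by simp
  have h2: "h (4/3) < 0" unfolding h_def gB_def qbp_of_def using s2 by simp
  obtain x where x: "6/5 \<le> x" "x \<le> 4/3" "h x = 0"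
    using IVT2'[of h "4/3" 0 "6/5", OF _ _ _ cont] h1 h2 by force
  have "x \<noteq> 6/5" using x(3) h1 by (metis less_irrefl)
  moreover have "x \<noteq> 4/3" using x(3) h2 by (metis less_irrefl)
  ultimately have Px: "?P x" using x unfolding h_def by auto
  have uniq: "y = x" if "?P y" for y
  proof (rule ccontr)
    assume "y \<noteq> x"
    then have "y < x \<or> x < y" by auto
    moreover have contra: False if "?P u1" "?P u2" "u1 < u2" for u1 u2
    proof -
      have l1: "6/5 < u1" "u1 < 4/3" "gB (qbp_of r u1) u1 = 0" using that(1) by auto
      have l2: "6/5 < u2" "u2 < 4/3" "gB (qbp_of r u2) u2 = 0" using that(2) by auto
      have lt: "u1 < u2" by (rule that(3))
      have q1: "qbp_of r u1 * (2*(u1 - 1)) = 2 - u1" using root_q l1 by blast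
      have q2: "qbp_of r u2 * (2*(u2 - 1)) = 2 - u2" using root_q l2 by blast
      have pos1: "0 < 2*(u1 - 1)" using l1(1) by (simp add: algebra_simps)
      have q1p: "qbp_of r u1 > 0"
      proof (rule ccontr)
        assume "\<not> qbp_of r u1 > 0"
        then have n: "qbp_of r u1 \<le> 0" by linarith
        have "qbp_of r u1 * (2*(u1 - 1)) \<le> 0" using mult_nonpos_nonneg[OF n less_imp_le[OF pos1]] .
        then show False using q1 l1(2) by linarith
      qed
      have a: "qbp_of r u1 < qbp_of r u2" using qbp_mono[OF r lt] .
      have b: "2*(u1 - 1) < 2*(u2 - 1)" using lt by (simp add: algebra_simps)
      have c: "0 < qbp_of r u2" using a q1p by linarith
      have d: "0 \<le> 2*(u1 - 1)" using pos1 by (simp add: algebra_simps)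
      have "qbp_of r u1 * (2*(u1 - 1)) < qbp_of r u2 * (2*(u2 - 1))"
        using mult_strict_mono[OF a b c d] .
      then show False using q1 q2 lt by linarith
    qed
    ultimately show False using contra[OF that Px] contra[OF Px that] by blast
  qed
  have "u_b r = x" unfolding u_b_def by (rule the_equality[where P = ?P, OF Px]) (rule uniq)
  then show ?thesis using Px by simp
qed

lemma tw_field_eq: "tw_field r D \<mu> c \<epsilon> = (\<lambda>X. vector [X$2, ((X$3 + \<mu>) * X$2 - fB (X$1) (X$3) r) / D,
             \<epsilon> / (X$3 - c) * gB (X$1) (X$3)])"
  by (rule ext) (simp add: tw_field_def)

lemmas nth_deriv = bounded_linear.has_derivative[OF bounded_linear_vec_nth]

lemma aux3:
  fixes w e h1 u q h3 G :: real
  assumes "w \<noteq> 0"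
  shows "(e*(2*h1*(1-u) - 2*q*h3 - h3)*w - e*G*h3)/(w*w) = e*(2-2*u)*h1/w + (e*(-1-2*q)/w - e*G/w^2)*h3"
  using assms by (simp add: field_simps power2_eq_square)

lemma deriv_at:
  assumes g0: "gB q0 u0 = 0" and uc: "u0 \<noteq> c" and D0: "D \<noteq> 0"
  shows "(tw_field r D \<mu> c \<epsilon> has_derivative (\<lambda>h.
     (vector[vector[0,1,0],
             vector[- ((r + u0 - 2 - (r + 1/10) * (q0 - 1)^2) - q0 * (r + 1/10) * (2 * (q0 - 1))) / D, (u0 + \<mu>) / D, - q0 / D],
             vector[\<epsilon> / (u0 - c) * (2 * (1 - u0)), 0, \<epsilon> / (u0 - c) * (-1 - 2 * q0)]] :: real^3^3) *v h))
     (at (vector [q0, 0, u0]))"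
proof -
  have raw: "(tw_field r D \<mu> c \<epsilon> has_derivative (\<lambda>h.
     (vector[vector[0,1,0],
             vector[- ((r + u0 - 2 - (r + 1/10) * (q0 - 1)^2) - q0 * (r + 1/10) * (2 * (q0 - 1))) / D, (u0 + \<mu>) / D, - q0 / D],
             vector[\<epsilon> / (u0 - c) * (2 * (1 - u0)), 0,
                    \<epsilon> / (u0 - c) * (-1 - 2 * q0) - \<epsilon> / (u0 - c)^2 * gB q0 u0]] :: real^3^3) *v h))
     (at (vector [q0, 0, u0]))"
  unfolding tw_field_eq
  proof (rule deriv3)
    show "((\<lambda>X::real^3. X$2) has_derivative (\<lambda>h. 0*h$1 + 1*h$2 + 0*h$3)) (at (vector [q0, 0, u0]))"
      by (auto intro!: derivative_eq_intros nth_deriv)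
    show "((\<lambda>X::real^3. ((X$3 + \<mu>) * X$2 - fB (X$1) (X$3) r) / D) has_derivative (\<lambda>h.
       (- ((r + u0 - 2 - (r + 1/10) * (q0 - 1)^2) - q0 * (r + 1/10) * (2 * (q0 - 1))) / D) * h$1
       + ((u0 + \<mu>) / D) * h$2 + (- q0 / D) * h$3)) (at (vector [q0, 0, u0]))"
      unfolding fB_def using D0
      by (auto intro!: derivative_eq_intros nth_deriv simp: field_simps power2_eq_square)
    show "((\<lambda>X::real^3. \<epsilon> / (X$3 - c) * gB (X$1) (X$3)) has_derivative (\<lambda>h.
       (\<epsilon> / (u0 - c) * (2 * (1 - u0))) * h$1 + 0 * h$2
       + (\<epsilon> / (u0 - c) * (-1 - 2 * q0) - \<epsilon> / (u0 - c)^2 * gB q0 u0) * h$3))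
       (at (vector [q0, 0, u0]))"
      using uc unfolding gB_def
      apply (auto intro!: derivative_eq_intros nth_deriv)
      apply (rule ext)
      subgoal for h
        using aux3[of "u0 - c" \<epsilon> "h$1" u0 q0 "h$3" "2 - u0 + 2 * q0 * (1 - u0)"] uc by simp
      done
  qed
  then show ?thesis using g0 by simp
qed

lemma hyp_from:
  fixes F :: "real^3 \<Rightarrow> real^3" and a b c d e :: real
  assumes "F x = 0" "(F has_derivative (\<lambda>h. (vector[vector[0,1,0], vector[a,b,c], vector[d,0,e]] :: real^3^3) *v h)) (at x)"
    and "e \<noteq> 0"
    and "\<And>y. e*(y^2 + a) + b*y^2 - c*d = 0 \<Longrightarrow> y * (b*e - y^2 - a) = 0 \<Longrightarrow> False"
  shows "hyperbolic_equilibrium F x"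
  unfolding hyperbolic_equilibrium_def
proof (intro conjI exI[of _ "\<lambda>h. (vector[vector[0,1,0], vector[a,b,c], vector[d,0,e]] :: real^3^3) *v h"] allI impI)
  show "F x = 0" by fact
  show "(F has_derivative (\<lambda>h. (vector[vector[0,1,0], vector[a,b,c], vector[d,0,e]] :: real^3^3) *v h)) (at x)" by fact
  fix z :: complex assume "Re z = 0"
  show "\<not> is_complex_eigenvalue (matrix (\<lambda>h. (vector[vector[0,1,0], vector[a,b,c], vector[d,0,e]] :: real^3^3) *v h)) z"
  proof
    assume "is_complex_eigenvalue (matrix (\<lambda>h. (vector[vector[0,1,0], vector[a,b,c], vector[d,0,e]] :: real^3^3) *v h)) z"
    then have "is_complex_eigenvalue (vector[vector[0,1,0], vector[a,b,c], vector[d,0,e]] :: real^3^3) z" by simp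
    from eig3_imag[OF this \<open>Re z = 0\<close> assms(3)] assms(4) show False by blast
  qed
qed

lemma arith1:
  fixes a b e y :: real
  assumes a: "a > 0" and e: "e < 0" and h1: "e*(y^2 + a) + b*y^2 - 0 = 0" and h2: "y * (b*e - y^2 - a) = 0"
  shows False
proof (cases "y = 0")
  case True
  then have "e * a = 0" using h1 by simp
  then show False using a e by simp
next
  case False
  then have y2: "y^2 = b*e - a" using h2 by simp
  have "e*(y^2 + a) + b*y^2 = b*(e^2 + y^2)" unfolding y2 by (simp add: algebra_simps power2_eq_square)
  then have "b*(e^2 + y^2) = 0" using h1 by simp
  moreover have "e^2 + y^2 > 0" using e by (simp add: add_pos_nonneg)
  ultimately have "b = 0" using e by auto
  then have "y^2 = - a" using y2 by simp
  moreover have "y^2 \<ge> 0" by simp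
  ultimately show False using a by linarith
qed

lemma arith2:
  fixes a b c d e y :: real
  assumes a: "a > 0" and e: "e < 0" and cd: "c*d > 0" and be: "b*e < a"
    and h1: "e*(y^2 + a) + b*y^2 - c*d = 0" and h2: "y * (b*e - y^2 - a) = 0"
  shows False
proof (cases "y = 0")
  case True
  then have "e * a = c*d" using h1 by simp
  moreover have "e * a < 0" using a e by (simp add: mult_neg_pos)
  ultimately show False using cd by simp
next
  case False
  then have y2: "y^2 = b*e - a" using h2 by simp
  moreover have "y^2 \<ge> 0" by simp
  ultimately show False using be by linarith
qed

theorem theorem1:
  fixes r D \<mu> c :: real
  assumes "r > 2/3" and "D > 0" and "c < u_b r"
  shows "\<exists>\<epsilon>0 > 0. \<forall>\<epsilon>. 0 < \<epsilon> \<and> \<epsilon> < \<epsilon>0 \<longrightarrow>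
           hyperbolic_equilibrium (tw_field r D \<mu> c \<epsilon>) (vector [0, 0, 2]) \<and>
           hyperbolic_equilibrium (tw_field r D \<mu> c \<epsilon>) (vector [q_bp r, 0, u_b r])"
proof -
  define u where "u = u_b r"
  define q where "q = q_bp r"
  have ub: "6/5 < u" "u < 4/3" "gB q u = 0"
    using u_b_props[OF assms(1)] unfolding u_def q_def q_bp_def by auto
  have qdef: "q = qbp_of r u" unfolding q_def q_bp_def u_def ..
  have qeq: "q * (2*(u - 1)) = 2 - u" using root_q[of r u] ub qdef by simp
  have q1: "q > 1"
  proof (rule ccontr)
    assume "\<not> q > 1"
    then have "q \<le> 1" by simp
    moreover have "0 \<le> 2*(u - 1)" using ub(1) by simp
    ultimately have "q * (2*(u - 1)) \<le> 1 * (2*(u - 1))" by (rule mult_right_mono)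
    then show False using qeq ub(2) by simp
  qed
  have sq: "sqrt ((r + u - 2) / (r + 1/10)) = q - 1" using qdef unfolding qbp_of_def by simp
  then have "sqrt ((r + u - 2) / (r + 1/10)) > 0" using q1 by simp
  then have argp: "(r + u - 2) / (r + 1/10) > 0" by simp
  have sq2: "(q - 1)^2 = (r + u - 2) / (r + 1/10)"
    using sq argp by (metis less_imp_le real_sqrt_pow2)
  have rp: "r + 1/10 > 0" using assms(1) by simp
  have sq3: "(r + 1/10) * (q - 1)^2 = r + u - 2" using sq2 rp by simp
  have D0: "D \<noteq> 0" using assms(2) by simp
  have uc: "u - c > 0" using assms(3) unfolding u_def by simp
  define A where "A = - ((r + u - 2 - (r + 1/10) * (q - 1)^2) - q * (r + 1/10) * (2 * (q - 1))) / D"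
  define B where "B = (u + \<mu>) / D"
  have A_eq: "A = q * (r + 1/10) * (2 * (q - 1)) / D" unfolding A_def sq3 by simp
  have Ap: "A > 0" unfolding A_eq using q1 rp assms(2) by simp
  define e0 where "e0 = (u - c) * A / ((\<bar>B\<bar> + 1) * (1 + 2*q))"
  have den: "(\<bar>B\<bar> + 1) * (1 + 2*q) > 0" using q1 by (simp add: add_pos_nonneg)
  have e0p: "e0 > 0" unfolding e0_def using uc Ap den by simp
  show ?thesis
  proof (intro exI[of _ e0] conjI e0p allI impI)
    fix \<epsilon> :: real assume "0 < \<epsilon> \<and> \<epsilon> < e0"
    then have ep: "0 < \<epsilon>" and el: "\<epsilon> < e0" by auto
    have c2: "2 - c > 0" using uc ub by simp
    show "hyperbolic_equilibrium (tw_field r D \<mu> c \<epsilon>) (vector [0, 0, 2])"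
    proof (rule hyp_from)
      show "tw_field r D \<mu> c \<epsilon> (vector [0, 0, 2]) = 0"
        by (simp add: tw_field_def fB_def gB_def vec_eq_iff forall_3)
      show "(tw_field r D \<mu> c \<epsilon> has_derivative (\<lambda>h.
         (vector[vector[0,1,0],
             vector[- ((r + 2 - 2 - (r + 1/10) * (0 - 1)^2) - 0 * (r + 1/10) * (2 * (0 - 1))) / D, (2 + \<mu>) / D, - 0 / D],
             vector[\<epsilon> / (2 - c) * (2 * (1 - 2)), 0, \<epsilon> / (2 - c) * (-1 - 2 * 0)]] :: real^3^3) *v h))
         (at (vector [0, 0, 2]))"
        by (rule deriv_at) (use c2 D0 in \<open>auto simp: gB_def\<close>)
      show "\<epsilon> / (2 - c) * (-1 - 2 * 0) \<noteq> 0" using ep c2 by simp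
      fix y :: real
      assume h1: "\<epsilon> / (2 - c) * (-1 - 2 * 0) * (y^2 + - ((r + 2 - 2 - (r + 1/10) * (0 - 1)^2) - 0 * (r + 1/10) * (2 * (0 - 1))) / D)
         + (2 + \<mu>) / D * y^2 - - 0 / D * (\<epsilon> / (2 - c) * (2 * (1 - 2))) = 0"
        and h2: "y * ((2 + \<mu>) / D * (\<epsilon> / (2 - c) * (-1 - 2 * 0)) - y^2 - - ((r + 2 - 2 - (r + 1/10) * (0 - 1)^2) - 0 * (r + 1/10) * (2 * (0 - 1))) / D) = 0"
      have aeq: "- ((r + 2 - 2 - (r + 1/10) * (0 - 1)^2) - 0 * (r + 1/10) * (2 * (0 - 1))) / D = (1/10) / D"
        by simp
      show False
        by (rule arith1[of "(1/10)/D" "\<epsilon> / (2 - c) * (-1 - 2 * 0)" y "(2 + \<mu>) / D"])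
           (use h1 h2 assms(2) ep c2 in \<open>simp_all only: aeq\<close>, simp_all)
    qed
    show "hyperbolic_equilibrium (tw_field r D \<mu> c \<epsilon>) (vector [q_bp r, 0, u_b r])"
      unfolding q_def[symmetric] u_def[symmetric]
    proof (rule hyp_from)
      have f0: "fB q u r = 0" unfolding fB_def using sq3 by simp
      show "tw_field r D \<mu> c \<epsilon> (vector [q, 0, u]) = 0"
        using f0 ub(3) by (simp add: tw_field_def vec_eq_iff forall_3)
      show "(tw_field r D \<mu> c \<epsilon> has_derivative (\<lambda>h.
         (vector[vector[0,1,0], vector[A, B, - q / D],
             vector[\<epsilon> / (u - c) * (2 * (1 - u)), 0, \<epsilon> / (u - c) * (-1 - 2 * q)]] :: real^3^3) *v h))
         (at (vector [q, 0, u]))"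
        unfolding A_def B_def by (rule deriv_at) (use ub uc D0 in auto)
      have k: "\<epsilon> / (u - c) > 0" using ep uc by simp
      have "-1 - 2 * q < 0" using q1 by simp
      from mult_pos_neg[OF k this] have eneg: "\<epsilon> / (u - c) * (-1 - 2 * q) < 0" .
      then show "\<epsilon> / (u - c) * (-1 - 2 * q) \<noteq> 0" by (metis less_irrefl)
      have cd: "(- q / D) * (\<epsilon> / (u - c) * (2 * (1 - u))) > 0"
      proof -
        have "- q / D < 0" using q1 assms(2) by simp
        moreover have "\<epsilon> / (u - c) * (2 * (1 - u)) < 0"
        proof -
          have "2 * (1 - u) < 0" using ub(1) by simp
          from mult_pos_neg[OF k this] show ?thesis .
        qed
        ultimately show ?thesis by (rule mult_neg_neg)
      qed
      have be: "B * (\<epsilon> / (u - c) * (-1 - 2 * q)) < A"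
      proof -
        define E where "E = \<epsilon> / (u - c) * (1 + 2 * q)"
        have "1 + 2 * q > 0" using q1 by simp
        from mult_pos_pos[OF k this] have Ep: "E \<ge> 0" unfolding E_def by simp
        have "B * (\<epsilon> / (u - c) * (-1 - 2 * q)) = - (B * E)" unfolding E_def by (simp add: algebra_simps)
        also have "\<dots> \<le> \<bar>B\<bar> * E" using Ep by (metis abs_ge_minus_self abs_mult abs_of_nonneg minus_mult_left order_trans abs_ge_self)
        also have "\<dots> \<le> (\<bar>B\<bar> + 1) * E" using Ep by (simp add: mult_right_mono)
        also have "\<dots> < A"
        proof -
          have "\<epsilon> / (u - c) < e0 / (u - c)" using el uc by (simp add: divide_strict_right_mono)
          also have "e0 / (u - c) = A / ((\<bar>B\<bar> + 1) * (1 + 2*q))" unfolding e0_def using uc by simp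
          finally have "\<epsilon> / (u - c) * ((\<bar>B\<bar> + 1) * (1 + 2*q)) < A"
            using den by (simp add: pos_less_divide_eq)
          moreover have "(\<bar>B\<bar> + 1) * E = \<epsilon> / (u - c) * ((\<bar>B\<bar> + 1) * (1 + 2*q))"
            unfolding E_def by (simp add: mult_ac)
          ultimately show ?thesis by simp
        qed
        finally show ?thesis .
      qed
      fix y :: real
      assume h1: "\<epsilon> / (u - c) * (-1 - 2 * q) * (y^2 + A) + B * y^2 - (- q / D) * (\<epsilon> / (u - c) * (2 * (1 - u))) = 0"
        and h2: "y * (B * (\<epsilon> / (u - c) * (-1 - 2 * q)) - y^2 - A) = 0"
      show False by (rule arith2[OF Ap eneg cd be h1 h2])
    qed
  qed
qed

end
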